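(* Let $G$ be a cyclic union of cliques $G_1,\dots,G_m$. Then $G$ is not a stable motif (for any CTLN $W(G,\varepsilon,\delta)$ with legal parameters).
   Context: A clique is a graph in which every pair of nodes is bidirectionally connected. A cyclic union of $G_1,\dots,G_m$ is the graph on the disjoint union of their vertex sets, keeping all edges within each $G_i$, adding all edges from every node of $G_i$ to every node of $G_{i+1}$ (indices mod $m$), and no other edges. Legal parameters: $\delta>0$, $0<\varepsilon<\frac{\delta}{\delta+1}$. For a graph $H$ on $[h]$, $W=W(H,\varepsilon,\delta)$ has $W_{ii}=0$, $W_{ij}=-1+\varepsilon$ if $j\to i$, $W_{ij}=-1-\delta$ if $i\ne j$, $j\not\to i$; dynamics $\dot x_i=-x_i+[\sum_jW_{ij}x_j+\theta]_+$, $\theta>0$; assumed nondegenerate. $H$ is a stable motif if $\theta(I-W)^{-1}1$ has all entries positive and all eigenvalues of $I-W$ have positive real part. *)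

theory Defs
  imports "Jordan_Normal_Form.Matrix" "Jordan_Normal_Form.Char_Poly"
begin

(* A directed graph H on the vertex set {0..<h}: E j i means the edge j \<rightarrow> i.
   Self-loops are irrelevant (W_ii = 0). *)

definition ctln_W :: "nat \<Rightarrow> (nat \<Rightarrow> nat \<Rightarrow> bool) \<Rightarrow> real \<Rightarrow> real \<Rightarrow> real mat" where
  "ctln_W h E eps delta = mat h h (\<lambda>(i, j).
      if i = j then 0 else if E j i then -1 + eps else -1 - delta)"

definition legal_params :: "real \<Rightarrow> real \<Rightarrow> bool" where
  "legal_params eps delta \<longleftrightarrow> delta > 0 \<and> 0 < eps \<and> eps < delta / (delta + 1)"

definition stable_motif :: "nat \<Rightarrow> (nat \<Rightarrow> nat \<Rightarrow> bool) \<Rightarrow> real \<Rightarrow> real \<Rightarrow> real \<Rightarrow> bool" where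
  "stable_motif h E eps delta theta \<longleftrightarrow>
     (let A = 1\<^sub>m h - ctln_W h E eps delta in
       (\<exists>B \<in> carrier_mat h h. inverts_mat A B \<and> inverts_mat B A \<and>
           (\<forall>i < h. (theta \<cdot>\<^sub>v (B *\<^sub>v vec h (\<lambda>_. 1))) $ i > 0)) \<and>
       (\<forall>lam. eigenvalue (map_mat complex_of_real A) lam \<longrightarrow> Re lam > 0))"

(* H (on {0..<h}, edge relation E) is a cyclic union of the cliques G_0, ..., G_{m-1},
   where vertex i lies in the clique G_(c i); all cliques are nonempty. *)
definition cyclic_union_of_cliques :: "nat \<Rightarrow> (nat \<Rightarrow> nat \<Rightarrow> bool) \<Rightarrow> nat \<Rightarrow> (nat \<Rightarrow> nat) \<Rightarrow> bool" where
  "cyclic_union_of_cliques h E m c \<longleftrightarrow>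
     (\<forall>i < h. c i < m) \<and> (\<forall>k < m. \<exists>i < h. c i = k) \<and>
     (\<forall>i < h. \<forall>j < h. i \<noteq> j \<longrightarrow> (E j i \<longleftrightarrow> c i = c j \<or> c i = (c j + 1) mod m))"

end

theory Submission
  imports Defs "Jordan_Normal_Form.Spectral_Radius"
begin


definition mtr :: "'a::comm_ring_1 mat \<Rightarrow> 'a" where
  "mtr A = (\<Sum>i<dim_row A. A $$ (i,i))"

lemma mtr_mult_comm:
  assumes A: "A \<in> carrier_mat n k" and B: "B \<in> carrier_mat k n"
  shows "mtr (A * B) = mtr (B * A)"
proof -
  have "mtr (A * B) = (\<Sum>i<n. \<Sum>j<k. A $$ (i,j) * B $$ (j,i))"
    using A B unfolding mtr_def
    by (auto simp: scalar_prod_def row_def col_def atLeast0LessThan intro!: sum.cong)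
  also have "\<dots> = (\<Sum>j<k. \<Sum>i<n. B $$ (j,i) * A $$ (i,j))"
    by (subst sum.swap) (simp add: mult.commute)
  also have "\<dots> = mtr (B * A)"
    using A B unfolding mtr_def
    by (auto simp: scalar_prod_def row_def col_def atLeast0LessThan intro!: sum.cong)
  finally show ?thesis .
qed

lemma eig_re_lt_trace:
  fixes Q :: "complex mat"
  assumes Q: "Q \<in> carrier_mat m m" and m2: "m \<ge> 2"
    and pos: "\<And>l. eigenvalue Q l \<Longrightarrow> Re l > 0"
    and ev: "eigenvalue Q lam"
  shows "Re lam < Re (mtr Q)"
proof -
  from char_poly_factorized[OF Q] obtain as where cp: "char_poly Q = (\<Prod>a\<leftarrow>as. [:- a, 1:])" by auto
  from jordan_nf_exists[OF Q cp] obtain n_as where jnf: "jordan_nf Q n_as" ..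
  define J where "J = jordan_matrix n_as"
  from jnf have sim: "similar_mat Q J" unfolding jordan_nf_def J_def by auto
  from similar_matD[OF sim] obtain n P P' where
    carr: "{Q, J, P, P'} \<subseteq> carrier_mat n n" and PP: "P' * P = 1\<^sub>m n" and QJ: "Q = P * J * P'" by auto
  have nm: "n = m" using carr Q by auto
  have J: "J \<in> carrier_mat m m" using carr nm by auto
  have P: "P \<in> carrier_mat m m" and P': "P' \<in> carrier_mat m m" using carr nm by auto
  have "mtr Q = mtr (P * (J * P'))" using QJ P J P' by (simp add: assoc_mult_mat)
  also have "\<dots> = mtr ((J * P') * P)" by (rule mtr_mult_comm[OF P], insert J P', auto)
  also have "(J * P') * P = J" using PP J P P' by (simp add: assoc_mult_mat[of J m m P' m P m] nm)
  finally have trJ: "mtr Q = (\<Sum>i<m. J $$ (i,i))" unfolding mtr_def using J by simp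
  have ut: "upper_triangular J" unfolding J_def upper_triangular_def
    using jordan_matrix_upper_triangular by auto
  have cpJ: "char_poly J = (\<Prod>a\<leftarrow>diag_mat J. [:- a, 1:])"
    by (rule char_poly_upper_triangular[OF J ut])
  have cpQJ: "char_poly Q = char_poly J" by (rule char_poly_similar[OF sim])
  have diag_ev: "eigenvalue Q (J $$ (i,i))" if "i < m" for i
  proof -
    have "J $$ (i,i) \<in> set (diag_mat J)" using that J unfolding diag_mat_def by auto
    hence "poly (char_poly J) (J $$ (i,i)) = 0" unfolding cpJ
      by (simp add: poly_prod_list prod_list_zero_iff)
    thus ?thesis using eigenvalue_root_char_poly[OF Q] cpQJ by simp
  qed
  have "poly (char_poly Q) lam = 0" using eigenvalue_root_char_poly[OF Q] ev by simp
  hence "lam \<in> set (diag_mat J)" unfolding cpQJ cpJ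
    by (auto simp: poly_prod_list prod_list_zero_iff)
  then obtain i0 where i0: "i0 < m" and lamJ: "lam = J $$ (i0,i0)"
    using J unfolding diag_mat_def by auto
  obtain i1 where i1: "i1 < m" "i1 \<noteq> i0" using m2 i0
    by (metis One_nat_def Suc_1 Suc_le_lessD less_Suc_eq_0_disj less_imp_Suc_add not_less_eq_eq zero_less_Suc)
  have e1: "Re (mtr Q) = (\<Sum>i<m. Re (J $$ (i,i)))" unfolding trJ by simp
  have e2: "(\<Sum>i<m. Re (J $$ (i,i))) = Re lam + (\<Sum>i\<in>{..<m} - {i0}. Re (J $$ (i,i)))"
    using i0 lamJ by (simp add: sum.remove)
  have e3: "(\<Sum>i\<in>{..<m} - {i0}. Re (J $$ (i,i))) > 0"
    by (rule sum_pos2[of _ i1]) (insert i1 pos diag_ev, auto simp: less_imp_le)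
  show ?thesis using e1 e2 e3 by linarith
qed



lemma pow_nonneg:
  fixes T :: "real mat"
  assumes T: "T \<in> carrier_mat n n" and nn: "\<And>i j. i < n \<Longrightarrow> j < n \<Longrightarrow> T $$ (i,j) \<ge> 0"
  shows "i < n \<Longrightarrow> j < n \<Longrightarrow> (T ^\<^sub>m k) $$ (i,j) \<ge> 0"
proof (induct k arbitrary: i j)
  case 0 thus ?case using T by (auto simp: one_mat_def)
next
  case (Suc k)
  have "(T ^\<^sub>m Suc k) $$ (i,j) = (\<Sum>l<n. (T ^\<^sub>m k) $$ (i,l) * T $$ (l,j))"
    using Suc T by (auto simp: scalar_prod_def row_def col_def atLeast0LessThan intro!: sum.cong)
  also have "\<dots> \<ge> 0" using Suc nn by (intro sum_nonneg) auto
  finally show ?case .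
qed

lemma pow_growth:
  fixes T :: "real mat"
  assumes T: "T \<in> carrier_mat n n" and nn: "\<And>i j. i < n \<Longrightarrow> j < n \<Longrightarrow> T $$ (i,j) \<ge> 0"
    and x: "x \<in> carrier_vec n" and gr: "\<And>i. i < n \<Longrightarrow> (T *\<^sub>v x) $ i \<ge> \<beta> * x $ i"
    and b: "\<beta> \<ge> 0"
  shows "i < n \<Longrightarrow> (T ^\<^sub>m k *\<^sub>v x) $ i \<ge> \<beta> ^ k * x $ i"
proof (induct k arbitrary: i)
  case 0 thus ?case using x T by simp
next
  case (Suc k)
  have Tk: "T ^\<^sub>m k \<in> carrier_mat n n" using T by simp
  have "(T ^\<^sub>m Suc k *\<^sub>v x) = T ^\<^sub>m k *\<^sub>v (T *\<^sub>v x)"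
    using assoc_mult_mat_vec[OF Tk T x] by simp
  hence f1: "(T ^\<^sub>m Suc k *\<^sub>v x) $ i = (T ^\<^sub>m k *\<^sub>v (T *\<^sub>v x)) $ i" by simp
  have f2: "(T ^\<^sub>m k *\<^sub>v (T *\<^sub>v x)) $ i = (\<Sum>l<n. (T ^\<^sub>m k) $$ (i,l) * (T *\<^sub>v x) $ l)"
    using Suc Tk T x by (subst index_mult_mat_vec) (auto simp: scalar_prod_def row_def atLeast0LessThan)
  have f3: "(\<Sum>l<n. (T ^\<^sub>m k) $$ (i,l) * (T *\<^sub>v x) $ l) \<ge> (\<Sum>l<n. (T ^\<^sub>m k) $$ (i,l) * (\<beta> * x $ l))"
    by (intro sum_mono mult_left_mono gr pow_nonneg[OF T nn]) (use Suc in auto)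
  have f4: "(\<Sum>l<n. (T ^\<^sub>m k) $$ (i,l) * (\<beta> * x $ l)) = \<beta> * (T ^\<^sub>m k *\<^sub>v x) $ i"
    using Suc Tk x by (subst index_mult_mat_vec) (auto simp: scalar_prod_def row_def atLeast0LessThan sum_distrib_left ac_simps)
  have f5: "\<beta> * (T ^\<^sub>m k *\<^sub>v x) $ i \<ge> \<beta> * (\<beta> ^ k * x $ i)"
    using Suc b by (intro mult_left_mono) auto
  have f6: "\<beta> ^ Suc k * x $ i = \<beta> * (\<beta> ^ k * x $ i)" by simp
  show ?case using f1 f2 f3 f4 f5 f6 by linarith
qed

lemma spectral_contra:
  fixes T :: "real mat"
  assumes T: "T \<in> carrier_mat n n" and nn: "\<And>i j. i < n \<Longrightarrow> j < n \<Longrightarrow> T $$ (i,j) \<ge> 0"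
    and x: "x \<in> carrier_vec n" and xnn: "\<And>i. i < n \<Longrightarrow> x $ i \<ge> 0"
    and i0: "i0 < n" and xi0: "x $ i0 > 0"
    and gr: "\<And>i. i < n \<Longrightarrow> (T *\<^sub>v x) $ i \<ge> \<beta> * x $ i"
    and b: "\<beta> > 1"
    and sr: "spectral_radius (map_mat complex_of_real T) < 1"
  shows False
proof -
  define Tc where "Tc = map_mat complex_of_real T"
  have Tc: "Tc \<in> carrier_mat n n" using T unfolding Tc_def by simp
  from char_poly_factorized[OF Tc] obtain as where cp: "char_poly Tc = (\<Prod>a\<leftarrow>as. [:- a, 1:])" by auto
  from jordan_nf_exists[OF Tc cp] have jnf: "\<exists>n_as. jordan_nf Tc n_as" .
  from spectral_radius_jnf_norm_bound_less_1[OF Tc sr[folded Tc_def] jnf]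
  obtain c where c: "\<And>k. norm_bound (Tc ^\<^sub>m k) c" by auto
  have bnd: "\<bar>(T ^\<^sub>m k) $$ (i,j)\<bar> \<le> c" if "i < n" "j < n" for i j k
  proof -
    have "Tc ^\<^sub>m k = map_mat complex_of_real (T ^\<^sub>m k)"
      unfolding Tc_def by (rule of_real_hom.mat_hom_pow[OF T, symmetric])
    with c[of k] that T show ?thesis unfolding norm_bound_def by auto
  qed
  define S where "S = (\<Sum>l<n. x $ l)"
  have up: "\<beta> ^ k * x $ i0 \<le> c * S" for k
  proof -
    have "\<beta> ^ k * x $ i0 \<le> (T ^\<^sub>m k *\<^sub>v x) $ i0"
      by (rule pow_growth[OF T nn x gr _ i0]) (use b in auto)
    also have "\<dots> = (\<Sum>l<n. (T ^\<^sub>m k) $$ (i0,l) * x $ l)"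
      using i0 T x by (simp add: scalar_prod_def row_def atLeast0LessThan)
    also have "\<dots> \<le> (\<Sum>l<n. c * x $ l)"
      by (intro sum_mono mult_right_mono) (use bnd i0 xnn in \<open>auto simp: abs_le_iff\<close>)
    finally show ?thesis by (simp add: S_def sum_distrib_left)
  qed
  obtain k where "c * S / x $ i0 < \<beta> ^ k" using real_arch_pow[OF b] by blast
  with up[of k] xi0 show False by (simp add: field_simps)
qed



lemma sum_fibers:
  assumes "\<And>j. j < (h::nat) \<Longrightarrow> c j < (m::nat)"
  shows "(\<Sum>j<h. f (c j)) = (\<Sum>l<m. of_nat (card {j \<in> {..<h}. c j = l}) * (f l :: 'a::semiring_1))"
proof -
  have "(\<Sum>l\<in>{..<m}. \<Sum>x\<in>{j \<in> {..<h}. c j = l}. f (c x)) = (\<Sum>j\<in>{..<h}. f (c j))"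
    by (rule sum.group[of "{..<h}" "{..<m}" c "\<lambda>j. f (c j)"]) (use assms in auto)
  moreover have "(\<Sum>x\<in>{j \<in> {..<h}. c j = l}. f (c x)) = of_nat (card {j \<in> {..<h}. c j = l}) * f l" for l
  proof -
    have "(\<Sum>x\<in>{j \<in> {..<h}. c j = l}. f (c x)) = (\<Sum>x\<in>{j \<in> {..<h}. c j = l}. f l)"
      by (rule sum.cong) auto
    thus ?thesis by simp
  qed
  ultimately show ?thesis by simp
qed

lemma shift_mat_vec:
  fixes Q :: "'a::field mat"
  assumes Q: "Q \<in> carrier_mat m m" and v: "v \<in> carrier_vec m" and k: "k < m"
  shows "(mat m m (\<lambda>(k,l). (if k = l then 1 else 0) + (Q $$ (k,l) - (if k = l then t else 0)) / s) *\<^sub>v v) $ k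
    = v $ k + ((Q *\<^sub>v v) $ k - t * v $ k) / s"
proof -
  have "(mat m m (\<lambda>(k,l). (if k = l then 1 else 0) + (Q $$ (k,l) - (if k = l then t else 0)) / s) *\<^sub>v v) $ k
     = (\<Sum>l<m. ((if k = l then 1 else 0) + (Q $$ (k,l) - (if k = l then t else 0)) / s) * v $ l)"
    using Q v k by (auto simp: scalar_prod_def row_def atLeast0LessThan intro!: sum.cong)
  also have "\<dots> = (\<Sum>l<m. (if k = l then v $ l - t * v $ l / s else 0) + Q $$ (k,l) * v $ l / s)"
    by (rule sum.cong) (auto simp: diff_divide_distrib add_divide_distrib algebra_simps)
  also have "\<dots> = v $ k - t * v $ k / s + (\<Sum>l<m. Q $$ (k,l) * v $ l) / s"
    using k by (simp add: sum.distrib sum_divide_distrib)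
  also have "(\<Sum>l<m. Q $$ (k,l) * v $ l) = (Q *\<^sub>v v) $ k"
    using Q v k by (auto simp: scalar_prod_def row_def atLeast0LessThan)
  finally show ?thesis by (simp add: diff_divide_distrib)
qed

lemma norm_lt1:
  fixes w :: complex
  assumes s: "s > 0" and rw: "Re w < 0" and b: "(cmod w)^2 < 2 * s * (- Re w)"
  shows "cmod (1 + w / complex_of_real s) < 1"
proof -
  have "(cmod (1 + w / complex_of_real s))^2 = (1 + Re w / s)^2 + (Im w / s)^2"
    by (simp add: cmod_power2 Re_divide_of_real Im_divide_of_real)
  also have "\<dots> = (s^2 + 2 * s * Re w + ((Re w)^2 + (Im w)^2)) / s^2"
    using s by (simp add: field_simps power2_eq_square)
  also have "(Re w)^2 + (Im w)^2 = (cmod w)^2" by (simp add: cmod_power2)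
  also have "(s^2 + 2 * s * Re w + (cmod w)^2) / s^2 < 1"
    using s b by (simp add: field_simps)
  finally have "(cmod (1 + w / complex_of_real s))^2 < 1" .
  thus ?thesis by (simp add: power_less_one_iff abs_square_less_1)
qed

theorem corollary4:
  fixes h m :: nat and E :: "nat \<Rightarrow> nat \<Rightarrow> bool" and c :: "nat \<Rightarrow> nat"
    and eps delta theta :: real
  assumes "m \<ge> 3"
    and "cyclic_union_of_cliques h E m c"
    and "legal_params eps delta"
    and "theta > 0"
  shows "\<not> stable_motif h E eps delta theta"
proof
  assume st: "stable_motif h E eps delta theta"
  define W where "W = ctln_W h E eps delta"
  define Ac where "Ac = map_mat complex_of_real (1\<^sub>m h - W)"
  have eigpos: "\<And>l. eigenvalue Ac l \<Longrightarrow> Re l > 0"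
    using st[unfolded stable_motif_def Let_def, THEN conjunct2] unfolding Ac_def W_def by blast
  from assms(2) have cm: "\<And>i. i < h \<Longrightarrow> c i < m" and surj: "\<And>k. k < m \<Longrightarrow> \<exists>i<h. c i = k"
    and edge: "\<And>i j. i < h \<Longrightarrow> j < h \<Longrightarrow> i \<noteq> j \<Longrightarrow> E j i = (c i = c j \<or> c i = (c j + 1) mod m)"
    unfolding cyclic_union_of_cliques_def by auto
  from assms(3) have dpos: "delta > 0" and epos: "eps > 0" and elt: "eps < delta / (delta + 1)"
    unfolding legal_params_def by auto
  have elt': "eps * (delta + 1) < delta" using elt dpos by (simp add: field_simps)
  have "delta / (delta + 1) < 1" using dpos by simp
  hence e1: "eps < 1" using elt by linarith
  have "eps * delta > 0" using epos dpos by simp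
  hence ed: "eps < delta" using elt' by (simp add: algebra_simps)
  have m0: "m > 0" and m2: "m \<ge> 2" using assms(1) by auto
  define nn where "nn l = card {j \<in> {..<h}. c j = l}" for l
  have nnpos: "nn l \<ge> 1" if "l < m" for l
  proof -
    from surj[OF that] obtain i where "i < h" "c i = l" by auto
    hence "{j \<in> {..<h}. c j = l} \<noteq> {}" by auto
    thus ?thesis unfolding nn_def by (simp add: Suc_le_eq card_gt_0_iff)
  qed
  have fib: "(\<Sum>j<h. f (c j)) = (\<Sum>l<m. of_nat (nn l) * (f l :: 'b::semiring_1))" for f
    unfolding nn_def by (rule sum_fibers[OF cm])
  have sumnn: "(\<Sum>l<m. real (nn l)) = real h"
    using fib[of "\<lambda>_. 1::real"] by simp
  define a where "a k l = (if k = l \<or> k = (l + 1) mod m then 1 - eps else 1 + delta)" for k l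
  have Aent: "Ac $$ (i,j) = complex_of_real (if i = j then 1 else a (c i) (c j))"
    if "i < h" "j < h" for i j
    using that edge[OF that] unfolding Ac_def W_def ctln_W_def a_def by (cases "i = j") simp_all
  define Q where "Q = mat m m (\<lambda>(k,l). (if k = l then eps else 0) + real (nn k) * a k l)"
  define Qc where "Qc = map_mat complex_of_real Q"
  have Q: "Q \<in> carrier_mat m m" unfolding Q_def by simp
  have Qc: "Qc \<in> carrier_mat m m" unfolding Qc_def Q_def by simp
  have "1\<^sub>m h - W \<in> carrier_mat h h" unfolding W_def ctln_W_def
    by (rule minus_carrier_mat) simp
  hence Ac: "Ac \<in> carrier_mat h h" unfolding Ac_def by (simp only: map_carrier_mat)
  have lift: "eigenvalue Ac lam" if "eigenvalue Qc lam" for lam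
  proof -
    have dQ: "dim_row Qc = m" using Qc by simp
    from that obtain z where z: "z \<in> carrier_vec m" "z \<noteq> 0\<^sub>v m" "Qc *\<^sub>v z = lam \<cdot>\<^sub>v z"
      unfolding eigenvalue_def eigenvector_def dQ by blast
    have zeq: "eps * z $ k + of_nat (nn k) * (\<Sum>l<m. complex_of_real (a k l) * z $ l) = lam * z $ k"
      if k: "k < m" for k
    proof -
      have "(Qc *\<^sub>v z) $ k = lam * z $ k" using z k by simp
      moreover have "(Qc *\<^sub>v z) $ k = (\<Sum>l<m. complex_of_real ((if k = l then eps else 0) + real (nn k) * a k l) * z $ l)"
        using z(1) k by (auto simp: Qc_def Q_def scalar_prod_def row_def atLeast0LessThan intro!: sum.cong)
      moreover have "\<dots> = (\<Sum>l<m. (if k = l then eps * z $ l else 0) + of_nat (nn k) * (complex_of_real (a k l) * z $ l))"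
        by (rule sum.cong) (auto simp: algebra_simps)
      moreover have "\<dots> = eps * z $ k + of_nat (nn k) * (\<Sum>l<m. complex_of_real (a k l) * z $ l)"
        using k by (simp add: sum.distrib sum_distrib_left)
      ultimately show ?thesis by simp
    qed
    define v where "v = vec h (\<lambda>i. z $ (c i) / of_nat (nn (c i)))"
    have v: "v \<in> carrier_vec h" unfolding v_def by simp
    have v0: "v \<noteq> 0\<^sub>v h"
    proof
      assume v0: "v = 0\<^sub>v h"
      have "\<exists>k<m. z $ k \<noteq> 0"
      proof (rule ccontr)
        assume "\<not> (\<exists>k<m. z $ k \<noteq> 0)"
        hence "z = 0\<^sub>v m" using z(1) by (intro eq_vecI) auto
        with z(2) show False by simp
      qed
      then obtain k where k: "k < m" "z $ k \<noteq> 0" by blast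
      from surj[OF k(1)] obtain i where i: "i < h" "c i = k" by auto
      have "v $ i = z $ k / of_nat (nn k)" using i unfolding v_def by simp
      moreover have "v $ i = 0" using v0 i by simp
      ultimately show False using k nnpos[OF k(1)] by simp
    qed
    have Av: "Ac *\<^sub>v v = lam \<cdot>\<^sub>v v"
    proof (rule eq_vecI)
      fix i assume "i < dim_vec (lam \<cdot>\<^sub>v v)"
      hence i: "i < h" using v by simp
      define k where "k = c i"
      have k: "k < m" using cm[OF i] k_def by simp
      have nk: "(of_nat (nn k) :: complex) \<noteq> 0" using nnpos[OF k] by simp
      have "(Ac *\<^sub>v v) $ i = (\<Sum>j<h. Ac $$ (i,j) * v $ j)"
        using Ac v i by (auto simp: scalar_prod_def row_def atLeast0LessThan)
      also have "\<dots> = (\<Sum>j<h. complex_of_real (a k (c j)) * v $ j + (if i = j then eps * v $ j else 0))"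
        by (rule sum.cong) (auto simp: Aent i k_def a_def algebra_simps)
      also have "\<dots> = (\<Sum>j<h. complex_of_real (a k (c j)) * (z $ (c j) / of_nat (nn (c j)))) + eps * v $ i"
        using i by (simp add: sum.distrib v_def)
      also have "(\<Sum>j<h. complex_of_real (a k (c j)) * (z $ (c j) / of_nat (nn (c j))))
          = (\<Sum>l<m. of_nat (nn l) * (complex_of_real (a k l) * (z $ l / of_nat (nn l))))"
        by (rule fib)
      also have "\<dots> = (\<Sum>l<m. complex_of_real (a k l) * z $ l)"
        by (rule sum.cong) (auto dest!: nnpos)
      also have "\<dots> = (lam * z $ k - eps * z $ k) / of_nat (nn k)"
        using zeq[OF k] nk by (simp add: field_simps)
      also have "v $ i = z $ k / of_nat (nn k)" using i unfolding v_def k_def by simp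
      finally have "(Ac *\<^sub>v v) $ i = lam * (z $ k / of_nat (nn k))"
        using nk by (simp add: field_simps)
      thus "(Ac *\<^sub>v v) $ i = (lam \<cdot>\<^sub>v v) $ i" using i unfolding v_def k_def by simp
    qed (use Ac v in simp)
    show ?thesis unfolding eigenvalue_def eigenvector_def
      using v v0 Av Ac by auto
  qed
  have Qpos: "\<And>l. eigenvalue Qc l \<Longrightarrow> Re l > 0" using lift eigpos by blast
  define tau where "tau = real m * eps + (1 - eps) * real h"
  have tr: "Re (mtr Qc) = tau"
  proof -
    have "Re (mtr Qc) = (\<Sum>k<m. Q $$ (k,k))" using Qc unfolding mtr_def Qc_def by (simp add: Q_def)
    also have "\<dots> = (\<Sum>k<m. eps + (1 - eps) * real (nn k))"
      by (rule sum.cong) (auto simp: Q_def a_def)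
    also have "\<dots> = tau" unfolding tau_def by (simp add: sum.distrib sum_distrib_left[symmetric] sumnn)
    finally show ?thesis .
  qed
  have ltau: "Re l < tau" if "eigenvalue Qc l" for l
    using eig_re_lt_trace[OF Qc m2 Qpos that] tr by simp
  have tau0: "tau > 0" unfolding tau_def using e1 epos m0 by (simp add: add_pos_nonneg)
  define F where "F = (\<lambda>l. (cmod (l - complex_of_real tau))^2 / (2 * (tau - Re l))) ` spectrum Qc"
  have finF: "finite F" unfolding F_def using card_finite_spectrum(1)[OF Qc] by simp
  define s where "s = Max (insert 0 F) + tau + 1"
  have Mx0: "Max (insert 0 F) \<ge> 0" using finF by simp
  have s_tau: "s > tau" unfolding s_def using Mx0 by simp
  have s0: "s > 0" using s_tau tau0 by simp
  have sF: "(cmod (l - complex_of_real tau))^2 / (2 * (tau - Re l)) < s" if "eigenvalue Qc l" for l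
  proof -
    have "(cmod (l - complex_of_real tau))^2 / (2 * (tau - Re l)) \<in> insert 0 F"
      unfolding F_def spectrum_def using that by auto
    hence "(cmod (l - complex_of_real tau))^2 / (2 * (tau - Re l)) \<le> Max (insert 0 F)"
      using finF by simp
    thus ?thesis unfolding s_def using tau0 by simp
  qed
  define T where "T = mat m m (\<lambda>(k,l). (if k = l then 1 else 0) + (Q $$ (k,l) - (if k = l then tau else 0)) / s)"
  have T: "T \<in> carrier_mat m m" unfolding T_def by simp
  define Tc where "Tc = map_mat complex_of_real T"
  have Tc: "Tc \<in> carrier_mat m m" unfolding Tc_def T_def by simp
  have Tc_eq: "Tc = mat m m (\<lambda>(k,l). (if k = l then 1 else 0) + (Qc $$ (k,l) - (if k = l then complex_of_real tau else 0)) / complex_of_real s)"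
    by (rule eq_matI) (auto simp: Tc_def T_def Qc_def Q_def)
  have sr: "spectral_radius Tc < 1"
  proof -
    from spectral_radius_mem_max(1)[OF Tc m0] obtain mu where mu: "mu \<in> spectrum Tc"
      and srmu: "spectral_radius Tc = cmod mu" by auto
    from mu obtain v where v: "v \<in> carrier_vec m" "v \<noteq> 0\<^sub>v m" "Tc *\<^sub>v v = mu \<cdot>\<^sub>v v"
      unfolding spectrum_def eigenvalue_def eigenvector_def using Tc by auto
    define lam where "lam = complex_of_real tau + complex_of_real s * (mu - 1)"
    have "Qc *\<^sub>v v = lam \<cdot>\<^sub>v v"
    proof (rule eq_vecI)
      fix k assume "k < dim_vec (lam \<cdot>\<^sub>v v)"
      hence k: "k < m" using v by simp
      have "mu * v $ k = (Tc *\<^sub>v v) $ k" using v k by simp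
      also have "\<dots> = v $ k + ((Qc *\<^sub>v v) $ k - complex_of_real tau * v $ k) / complex_of_real s"
        unfolding Tc_eq by (rule shift_mat_vec[OF Qc v(1) k])
      finally have "mu * v $ k = v $ k + ((Qc *\<^sub>v v) $ k - complex_of_real tau * v $ k) / complex_of_real s" .
      hence "(Qc *\<^sub>v v) $ k = complex_of_real tau * v $ k + complex_of_real s * (mu - 1) * v $ k"
        using s0 by (simp add: field_simps)
      thus "(Qc *\<^sub>v v) $ k = (lam \<cdot>\<^sub>v v) $ k" using k v unfolding lam_def by (simp add: algebra_simps)
    qed (use Qc v in simp)
    hence evl: "eigenvalue Qc lam" unfolding eigenvalue_def eigenvector_def using v Qc by auto
    have mu_eq: "mu = 1 + (lam - complex_of_real tau) / complex_of_real s"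
      unfolding lam_def using s0 by (simp add: field_simps)
    have r: "Re (lam - complex_of_real tau) < 0" using ltau[OF evl] by simp
    have b: "(cmod (lam - complex_of_real tau))^2 < 2 * s * (- Re (lam - complex_of_real tau))"
      using sF[OF evl] ltau[OF evl] s0 by (simp add: field_simps)
    show ?thesis unfolding srmu mu_eq by (rule norm_lt1[OF s0 r b])
  qed
  define x where "x = vec m (\<lambda>k. real (nn k))"
  have x: "x \<in> carrier_vec m" unfolding x_def by simp
  have anng: "a k l \<ge> 0" for k l unfolding a_def using e1 dpos by auto
  have Tnn: "T $$ (k,l) \<ge> 0" if "k < m" "l < m" for k l
  proof (cases "k = l")
    case True
    have "Q $$ (k,l) \<ge> 0" using that epos anng unfolding Q_def by auto
    hence "(Q $$ (k,l) - tau) / s \<ge> -1" using s0 s_tau by (simp add: field_simps)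
    thus ?thesis using that True unfolding T_def by simp
  next
    case False
    have "Q $$ (k,l) \<ge> 0" using that epos anng unfolding Q_def by auto
    thus ?thesis using that False s0 unfolding T_def by simp
  qed
  define eta where "eta = (delta + eps) * (real m - 2) - (real m - 1) * eps"
  have eta0: "eta > 0"
  proof -
    have "eta = delta * (real m - 2) - eps" unfolding eta_def by (simp add: algebra_simps)
    moreover have "delta * (real m - 2) \<ge> delta" using assms(1) dpos by simp
    ultimately show ?thesis using ed by simp
  qed
  have rowsum: "(\<Sum>l<m. a k l * real (nn l)) \<ge> (1 - eps) * real h + (delta + eps) * (real m - 2)"
    if k: "k < m" for k
  proof -
    define R where "R = {l \<in> {..<m}. k = l \<or> k = (l + 1) mod m}"
    have Rsub: "R \<subseteq> {k, (k + m - 1) mod m}"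
    proof
      fix l assume "l \<in> R"
      hence l: "l < m" and kl: "k = l \<or> k = (l + 1) mod m" unfolding R_def by auto
      show "l \<in> {k, (k + m - 1) mod m}"
      proof (cases "k = l")
        case False
        with kl have kl': "k = (l + 1) mod m" by simp
        show ?thesis
        proof (cases "l + 1 < m")
          case True
          hence "k = l + 1" using kl' by simp
          hence "(k + m - 1) mod m = l" using l by simp
          thus ?thesis by simp
        next
          case False
          hence "l + 1 = m" using l by simp
          hence "k = 0" using kl' by simp
          hence "(k + m - 1) mod m = l" using l \<open>l + 1 = m\<close> by simp
          thus ?thesis by simp
        qed
      qed simp
    qed
    have c2: "card {k, (k + m - 1) mod m} \<le> 2"
      by (cases "k = (k + m - 1) mod m") auto
    have cR: "card R \<le> 2" using card_mono[OF _ Rsub] c2 by simp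
    have aeq: "a k l * real (nn l) = (1 - eps) * real (nn l) + (if l \<in> R then 0 else (delta + eps) * real (nn l))"
      if "l < m" for l
      using that unfolding a_def R_def by (auto simp: algebra_simps)
    have "(\<Sum>l<m. a k l * real (nn l)) = (1 - eps) * real h + (\<Sum>l<m. if l \<in> R then 0 else (delta + eps) * real (nn l))"
      by (simp add: aeq sum.distrib sum_distrib_left[symmetric] sumnn)
    moreover have "(\<Sum>l<m. if l \<in> R then 0 else (delta + eps) * real (nn l)) \<ge> (\<Sum>l<m. if l \<in> R then 0 else (delta + eps))"
      by (rule sum_mono) (use nnpos epos dpos in auto)
    moreover have "(\<Sum>l<m. if l \<in> R then 0 else (delta + eps)) = (delta + eps) * real (card ({..<m} - R))"
    proof -
      have "(\<Sum>l<m. if l \<in> R then 0 else (delta + eps)) = (\<Sum>l\<in>{..<m} - R. (delta + eps))"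
        by (rule sum.mono_neutral_cong_right) auto
      thus ?thesis by simp
    qed
    moreover have "card ({..<m} - R) \<ge> m - 2"
    proof -
      have "R \<subseteq> {..<m}" unfolding R_def by auto
      hence "card ({..<m} - R) = m - card R" by (simp add: card_Diff_subset finite_subset)
      thus ?thesis using cR by simp
    qed
    hence "real (card ({..<m} - R)) \<ge> real m - 2" using m2 by linarith
    hence "(delta + eps) * real (card ({..<m} - R)) \<ge> (delta + eps) * (real m - 2)"
      using dpos epos by (intro mult_left_mono) auto
    ultimately show ?thesis by linarith
  qed
  have Tx: "(T *\<^sub>v x) $ k \<ge> (1 + eta / s) * x $ k" if k: "k < m" for k
  proof -
    have "(Q *\<^sub>v x) $ k = (\<Sum>l<m. ((if k = l then eps else 0) + real (nn k) * a k l) * real (nn l))"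
      using k by (auto simp: Q_def x_def scalar_prod_def row_def atLeast0LessThan intro!: sum.cong)
    also have "\<dots> = (\<Sum>l<m. (if k = l then eps * real (nn l) else 0) + real (nn k) * (a k l * real (nn l)))"
      by (rule sum.cong) (auto simp: algebra_simps)
    also have "\<dots> = eps * real (nn k) + real (nn k) * (\<Sum>l<m. a k l * real (nn l))"
      using k by (simp add: sum.distrib sum_distrib_left)
    finally have Qx: "(Q *\<^sub>v x) $ k = eps * real (nn k) + real (nn k) * (\<Sum>l<m. a k l * real (nn l))" .
    have "real (nn k) * (\<Sum>l<m. a k l * real (nn l)) \<ge> real (nn k) * ((1 - eps) * real h + (delta + eps) * (real m - 2))"
      by (rule mult_left_mono[OF rowsum[OF k]]) simp
    moreover have "eta * real (nn k) = real (nn k) * ((1 - eps) * real h + (delta + eps) * (real m - 2))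
        + eps * real (nn k) - tau * real (nn k)"
      unfolding eta_def tau_def by (simp add: algebra_simps)
    moreover have xk: "x $ k = real (nn k)" using k unfolding x_def by simp
    ultimately have Qx2: "(Q *\<^sub>v x) $ k - tau * x $ k \<ge> eta * x $ k"
      unfolding Qx xk by linarith
    have "(T *\<^sub>v x) $ k = x $ k + ((Q *\<^sub>v x) $ k - tau * x $ k) / s"
      unfolding T_def by (rule shift_mat_vec[OF Q x k])
    also have "\<dots> \<ge> x $ k + eta * x $ k / s"
      using Qx2 s0 by (simp add: divide_right_mono)
    finally show ?thesis by (simp add: algebra_simps)
  qed
  have xnn: "x $ k \<ge> 0" if "k < m" for k using that unfolding x_def by simp
  have x0: "x $ 0 > 0" using nnpos[OF m0] m0 unfolding x_def by simp
  have beta: "1 + eta / s > 1" using eta0 s0 by simp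
  show False
    by (rule spectral_contra[OF T Tnn x xnn m0 x0 Tx beta sr[unfolded Tc_def]])
qed

end
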